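(* Let $K$ be a compact subset of $[0,1]$ and let $\boldsymbol\eta_K=(\eta_t)_{t\in K}$ be a max-stable process on $K$ with standard negative exponential margins, i.e. $P(\eta_t\le x)=\exp(x)$ for $x\le 0$, $t\in K$, which realizes in the space $\bar C^-(K):=\{f:K\to(-\infty,0]:\ f\text{ continuous}\}$. Then \[ P\Big(\max_{t\in K}\eta_t<0\Big)=1. \]
   Context: A process $\boldsymbol\eta_K$ with continuous paths on $K$ is called max-stable if for independent copies $\boldsymbol\eta_K^{(1)},\boldsymbol\eta_K^{(2)},\dots$ of $\boldsymbol\eta_K$ and every $n\in\mathbb N$ there exist functions $a_n>0$, $b_n$ on $K$ such that $\boldsymbol\eta_K$ has the same distribution as $\max_{1\le i\le n}(\boldsymbol\eta_K^{(i)}-b_n)/a_n$, the maximum and all operations being taken pointwise. *)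

theory Defs
  imports "HOL-Probability.Probability"
begin

text \<open>A stochastic process on an index set K is given as eta :: 'a => real => real,
  eta omega t being the value at time t in the sample point omega of the
  probability space M. The maximum of n independent
  copies is realized on the product probability space of n copies of M.\<close>

definition process_law :: "'a measure \<Rightarrow> real set \<Rightarrow> ('a \<Rightarrow> real \<Rightarrow> real) \<Rightarrow> (real \<Rightarrow> real) measure" where
  "process_law M K eta = distr M (PiM K (\<lambda>_. borel)) (\<lambda>\<omega>. restrict (eta \<omega>) K)"

definition max_stable :: "'a measure \<Rightarrow> real set \<Rightarrow> ('a \<Rightarrow> real \<Rightarrow> real) \<Rightarrow> bool" where
  "max_stable M K eta \<longleftrightarrow>
     (\<forall>n::nat. n \<ge> 1 \<longrightarrow>
        (\<exists>a b :: real \<Rightarrow> real. (\<forall>t\<in>K. a t > 0) \<and>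
           process_law M K eta =
           distr (PiM {..<n} (\<lambda>_. M)) (PiM K (\<lambda>_. borel))
             (\<lambda>\<omega>. \<lambda>t\<in>K. Max ((\<lambda>i. (eta (\<omega> i) t - b t) / a t) ` {..<n}))))"

end

theory Submission imports Defs begin

lemma L1:
  assumes "prob_space M" "A \<in> sets M"
  shows "measure (PiM {..<2::nat} (\<lambda>_. M)) (PiE {..<2} (\<lambda>_. A)) = measure M A ^ 2"
proof -
  have pp: "product_prob_space (\<lambda>_::nat. M)" using assms(1) by (rule product_prob_spaceI)
  interpret finite_product_prob_space "\<lambda>_. M" "{..<2::nat}"
    using pp unfolding finite_product_prob_space_def finite_product_sigma_finite_def
      finite_product_sigma_finite_axioms_def product_prob_space_def by auto
  have "prob (PiE {..<2} (\<lambda>_. A)) = (\<Prod>i\<in>{..<2::nat}. measure M A)"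
    using assms by (intro prob_times) auto
  then show ?thesis by (simp add: eval_nat_numeral power2_eq_square)
qed

lemma ex_inverse_of_nat_Suc_less:
  assumes "(x::real) > 0" shows "\<exists>m. inverse (real (Suc m)) < x"
proof -
  obtain n where "n > 0" "inverse (real n) < x" using ex_inverse_of_nat_less[OF assms] by auto
  then show ?thesis by (intro exI[of _ "n - 1"]) auto
qed

definition EE :: "real set \<Rightarrow> (real \<Rightarrow> real) \<Rightarrow> bool" where
  "EE D f \<longleftrightarrow> (\<forall>m::nat. \<exists>s\<in>D. - 1 / real (Suc m) < f s)"

lemma EE_max: "EE D (\<lambda>s. max (2 * f s) (2 * g s)) \<longleftrightarrow> EE D f \<or> EE D g"
proof
  assume h: "EE D f \<or> EE D g"
  show "EE D (\<lambda>s. max (2 * f s) (2 * g s))"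
    unfolding EE_def
  proof
    fix m
    have e: "- 1 / real (Suc m) = 2 * (- 1 / real (Suc (2*m+1)))" by (simp add: field_simps)
    from h show "\<exists>s\<in>D. - 1 / real (Suc m) < max (2 * f s) (2 * g s)"
    proof
      assume "EE D f"
      then obtain s where "s \<in> D" "- 1 / real (Suc (2*m+1)) < f s" unfolding EE_def by blast
      then show ?thesis unfolding e by (intro bexI[of _ s]) auto
    next
      assume "EE D g"
      then obtain s where "s \<in> D" "- 1 / real (Suc (2*m+1)) < g s" unfolding EE_def by blast
      then show ?thesis unfolding e by (intro bexI[of _ s]) auto
    qed
  qed
next
  assume h: "EE D (\<lambda>s. max (2 * f s) (2 * g s))"
  show "EE D f \<or> EE D g"
  proof (rule ccontr)
    assume "\<not> (EE D f \<or> EE D g)"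
    then obtain m1 m2 where m1: "\<forall>s\<in>D. f s \<le> - 1 / real (Suc m1)"
      and m2: "\<forall>s\<in>D. g s \<le> - 1 / real (Suc m2)"
      unfolding EE_def by (auto simp: not_less)
    define m where "m = max m1 m2"
    from h obtain s where s: "s \<in> D" "- 1 / real (Suc m) < max (2 * f s) (2 * g s)"
      unfolding EE_def by blast
    have a: "2 * (- 1 / real (Suc m1)) \<le> - 1 / real (Suc m)"
      by (simp add: m_def field_simps)
    have b: "2 * (- 1 / real (Suc m2)) \<le> - 1 / real (Suc m)"
      by (simp add: m_def field_simps)
    show False using s m1 m2 a b by fastforce
  qed
qed

lemma EE_cover:
  assumes "finite T" "D \<subseteq> (\<Union>t\<in>T. ball t (r t))" "EE D f"
  shows "\<exists>t\<in>T. EE (D \<inter> ball t (r t)) f"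
proof (rule ccontr)
  assume "\<not> ?thesis"
  then have "\<forall>t\<in>T. \<exists>m. \<forall>s\<in>D \<inter> ball t (r t). f s \<le> - 1 / real (Suc m)"
    unfolding EE_def by (auto simp: not_less)
  then obtain mm where mm: "\<And>t s. t \<in> T \<Longrightarrow> s \<in> D \<inter> ball t (r t) \<Longrightarrow> f s \<le> - 1 / real (Suc (mm t))"
    by metis
  define m where "m = (\<Sum>t\<in>T. mm t)"
  from assms(3) obtain s where s: "s \<in> D" "- 1 / real (Suc m) < f s" unfolding EE_def by blast
  then obtain t where t: "t \<in> T" "s \<in> ball t (r t)" using assms(2) by blast
  have "mm t \<le> m" unfolding m_def using t(1) assms(1) by (intro member_le_sum) auto
  then have "- 1 / real (Suc (mm t)) \<le> - 1 / real (Suc m)" by (simp add: field_simps)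
  with mm[of t s] s t show False by auto
qed

lemma EE_cong: "(\<And>s. s \<in> D \<Longrightarrow> f s = g s) \<Longrightarrow> EE D f = EE D g"
  unfolding EE_def by auto

lemma dense_countable:
  fixes K :: "real set"
  assumes "compact K"
  shows "\<exists>D. countable D \<and> D \<subseteq> K \<and> (\<forall>t\<in>K. \<forall>\<delta>>0. \<exists>s\<in>D. dist s t < \<delta>)"
proof -
  have "\<forall>m::nat. \<exists>C. C \<subseteq> K \<and> finite C \<and> K \<subseteq> (\<Union>c\<in>C. ball c (1 / real (Suc m)))"
  proof
    fix m
    have "K \<subseteq> (\<Union>c\<in>K. ball c (1 / real (Suc m)))" by force
    then obtain C where "C \<subseteq> K" "finite C" "K \<subseteq> (\<Union>c\<in>C. ball c (1 / real (Suc m)))"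
      using compactE_image[OF assms, of K "\<lambda>c. ball c (1 / real (Suc m))"] by auto
    then show "\<exists>C. C \<subseteq> K \<and> finite C \<and> K \<subseteq> (\<Union>c\<in>C. ball c (1 / real (Suc m)))" by blast
  qed
  then obtain C where C: "\<And>m. C m \<subseteq> K" "\<And>m. finite (C m)"
      "\<And>m. K \<subseteq> (\<Union>c\<in>C m. ball c (1 / real (Suc m)))"
    by metis
  define D where "D = (\<Union>m. C m)"
  have "countable D" unfolding D_def using C(2) by (auto intro: countable_finite)
  moreover have "D \<subseteq> K" unfolding D_def using C(1) by auto
  moreover have "\<forall>t\<in>K. \<forall>\<delta>>0. \<exists>s\<in>D. dist s t < \<delta>"
  proof (intro ballI allI impI)
    fix t \<delta> assume t: "t \<in> K" and d: "(\<delta>::real) > 0"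
    obtain m where m: "inverse (real (Suc m)) < \<delta>" using ex_inverse_of_nat_Suc_less[OF d] by blast
    from C(3)[of m] t obtain c where "c \<in> C m" "t \<in> ball c (1 / real (Suc m))" by blast
    moreover have "dist c t < 1 / real (Suc m)" using calculation(2) by (simp add: dist_commute)
    moreover have "1 / real (Suc m) < \<delta>" using m by (simp add: inverse_eq_divide)
    ultimately show "\<exists>s\<in>D. dist s t < \<delta>" unfolding D_def
      by (intro bexI[of _ c]) auto
  qed
  ultimately show ?thesis by blast
qed

lemma cont0:
  fixes f :: "real \<Rightarrow> real"
  assumes "continuous_on K f" "t0 \<in> K" "D \<subseteq> K"
    and "\<forall>m::nat. \<exists>s\<in>D \<inter> ball t0 (1 / real (Suc m)). - 1 / real (Suc m) < f s"
  shows "f t0 \<ge> 0"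
proof (rule ccontr)
  assume "\<not> f t0 \<ge> 0"
  then have c: "- f t0 / 2 > 0" by simp
  from assms(1) assms(2) c obtain \<delta> where d: "\<delta> > 0"
    "\<And>x'. x' \<in> K \<Longrightarrow> dist x' t0 < \<delta> \<Longrightarrow> dist (f x') (f t0) < - f t0 / 2"
    unfolding continuous_on_iff by metis
  have "min \<delta> (- f t0 / 2) > 0" using d c by simp
  then obtain m where m: "inverse (real (Suc m)) < min \<delta> (- f t0 / 2)"
    using ex_inverse_of_nat_Suc_less by blast
  from assms(4)[rule_format, of m] obtain s where s: "s \<in> D" "dist t0 s < 1 / real (Suc m)" "- 1 / real (Suc m) < f s"
    by auto
  have m1: "1 / real (Suc m) < \<delta>" "1 / real (Suc m) < - f t0 / 2"
    using m by (simp_all add: inverse_eq_divide)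
  have "dist s t0 < \<delta>" using s(2) m1 by (simp add: dist_commute)
  then have "dist (f s) (f t0) < - f t0 / 2" using d(2) s(1) assms(3) by auto
  then have "f s < f t0 / 2" by (simp add: dist_real_def abs_less_iff)
  then show False using s(3) m1 by linarith
qed

lemma sup_char:
  fixes f :: "real \<Rightarrow> real"
  assumes "continuous_on K f" "K \<noteq> {}" "\<forall>t\<in>K. f t \<le> 0" "D \<subseteq> K"
    and dense: "\<forall>t\<in>K. \<forall>\<delta>>0. \<exists>s\<in>D. dist s t < \<delta>"
  shows "(SUP t\<in>K. f t) < 0 \<longleftrightarrow> \<not> EE D f"
proof
  have bdd: "bdd_above (f ` K)" using assms(3) by (auto intro: bdd_aboveI[of _ 0])
  assume lt: "(SUP t\<in>K. f t) < 0"
  show "\<not> EE D f"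
  proof
    assume E: "EE D f"
    obtain m where m: "inverse (real (Suc m)) < - (SUP t\<in>K. f t)"
      using ex_inverse_of_nat_Suc_less[of "- (SUP t\<in>K. f t)"] lt by auto
    from E obtain s where s: "s \<in> D" "- 1 / real (Suc m) < f s" unfolding EE_def by blast
    have "f s \<le> (SUP t\<in>K. f t)" using s(1) assms(4) bdd by (intro cSUP_upper) auto
    moreover have "(SUP t\<in>K. f t) < - 1 / real (Suc m)" using m by (simp add: inverse_eq_divide)
    ultimately show False using s by linarith
  qed
next
  have bdd: "bdd_above (f ` K)" using assms(3) by (auto intro: bdd_aboveI[of _ 0])
  assume nE: "\<not> EE D f"
  show "(SUP t\<in>K. f t) < 0"
  proof (rule ccontr)
    assume "\<not> (SUP t\<in>K. f t) < 0"
    then have ge: "(SUP t\<in>K. f t) \<ge> 0" by simp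
    have "EE D f" unfolding EE_def
    proof
      fix m
      have pos: "1 / (2 * real (Suc m)) > 0" by simp
      have "- 1 / (2 * real (Suc m)) < (SUP t\<in>K. f t)" using ge pos by linarith
      then obtain t where t: "t \<in> K" "- 1 / (2 * real (Suc m)) < f t"
        using less_cSUP_iff[OF assms(2) bdd] by blast
      from assms(1) t(1) pos obtain \<delta> where d: "\<delta> > 0"
        "\<And>x'. x' \<in> K \<Longrightarrow> dist x' t < \<delta> \<Longrightarrow> dist (f x') (f t) < 1 / (2 * real (Suc m))"
        unfolding continuous_on_iff by metis
      from dense t(1) d(1) obtain s where s: "s \<in> D" "dist s t < \<delta>" by blast
      have "dist (f s) (f t) < 1 / (2 * real (Suc m))" using d(2) s assms(4) by auto
      then have "- 1 / real (Suc m) < f s" using t(2)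
        by (simp add: dist_real_def abs_less_iff field_simps)
      then show "\<exists>s\<in>D. - 1 / real (Suc m) < f s" using s(1) by blast
    qed
    with nE show False by simp
  qed
qed

theorem mainTheorem1:
  fixes M :: "'a measure" and K :: "real set" and eta :: "'a \<Rightarrow> real \<Rightarrow> real"
  assumes "prob_space M"
    and "compact K" and "K \<subseteq> {0..1}" and "K \<noteq> {}"
    and "\<forall>t\<in>K. (\<lambda>\<omega>. eta \<omega> t) \<in> borel_measurable M"
    and "\<forall>\<omega>\<in>space M. continuous_on K (eta \<omega>) \<and> (\<forall>t\<in>K. eta \<omega> t \<le> 0)"
    and "\<forall>t\<in>K. \<forall>x::real. x \<le> 0 \<longrightarrow> measure M {\<omega>\<in>space M. eta \<omega> t \<le> x} = exp x"
    and "max_stable M K eta"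
  shows "measure M {\<omega>\<in>space M. (SUP t\<in>K. eta \<omega> t) < 0} = 1"
proof -
  interpret prob_space M by fact
  define N where "N = PiM K (\<lambda>_. borel :: real measure)"
  define Pi2 where "Pi2 = PiM {..<2::nat} (\<lambda>_. M)"
  interpret Q: prob_space Pi2 unfolding Pi2_def using assms(1) by (intro prob_space_PiM)
  have etam: "\<And>t. t \<in> K \<Longrightarrow> (\<lambda>\<omega>. eta \<omega> t) \<in> borel_measurable M" using assms(5) by auto
  from assms(8) obtain a b where apos: "\<forall>t\<in>K. a t > 0" and law:
    "process_law M K eta = distr Pi2 N
       (\<lambda>\<omega>. \<lambda>t\<in>K. Max ((\<lambda>i. (eta (\<omega> i) t - b t) / a t) ` {..<2}))"
    using assms(8) unfolding max_stable_def Pi2_def N_def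
    by (elim allE[of _ "2::nat"]) auto
  define Y where "Y = (\<lambda>\<omega>. \<lambda>t\<in>K. Max ((\<lambda>i. (eta (\<omega> i) t - b t) / a t) ` {..<2::nat}))"
  define X where "X = (\<lambda>\<omega>. restrict (eta \<omega>) K)"
  have Xm: "X \<in> M \<rightarrow>\<^sub>M N" unfolding X_def N_def
    by (rule measurable_restrict) (use etam in auto)
  have Ym: "Y \<in> Pi2 \<rightarrow>\<^sub>M N" unfolding Y_def N_def
  proof (rule measurable_restrict)
    fix t assume t: "t \<in> K"
    show "(\<lambda>\<omega>. Max ((\<lambda>i. (eta (\<omega> i) t - b t) / a t) ` {..<2::nat})) \<in> Pi2 \<rightarrow>\<^sub>M borel"
    proof (rule borel_measurable_Max)
      fix i :: nat assume i: "i \<in> {..<2}"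
      have "(\<lambda>\<omega>. \<omega> i) \<in> Pi2 \<rightarrow>\<^sub>M M" unfolding Pi2_def using i
        by (rule measurable_component_singleton)
      then have "(\<lambda>\<omega>. eta (\<omega> i) t) \<in> borel_measurable Pi2"
        using etam[OF t] by (rule measurable_compose)
      then show "(\<lambda>\<omega>. (eta (\<omega> i) t - b t) / a t) \<in> borel_measurable Pi2" by measurable
    qed simp
  qed
  have lawS: "measure M (X -` S \<inter> space M) = measure Pi2 (Y -` S \<inter> space Pi2)" if "S \<in> sets N" for S
  proof -
    have "measure M (X -` S \<inter> space M) = measure (distr M N X) S"
      using Xm that by (simp add: measure_distr)
    also have "distr M N X = distr Pi2 N Y" using law unfolding process_law_def X_def Y_def N_def by simp
    also have "measure \<dots> S = measure Pi2 (Y -` S \<inter> space Pi2)"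
      using Ym that by (simp add: measure_distr)
    finally show ?thesis .
  qed
  have spPi2: "space Pi2 = PiE {..<2} (\<lambda>_. space M)" unfolding Pi2_def by (simp add: space_PiM)
  have F: "measure M {\<omega>\<in>space M. eta \<omega> s \<le> z} = exp (min z 0)" if s: "s \<in> K" for s z
  proof (cases "z \<le> 0")
    case True then show ?thesis using assms(7) s by (simp add: min_def)
  next
    case False
    then have "{\<omega>\<in>space M. eta \<omega> s \<le> z} = space M" using assms(6) s by force
    then show ?thesis using False by (simp add: prob_space)
  qed
  have compN: "{x\<in>space N. P (x s)} \<in> sets N" if "s \<in> K" "{y. P y} \<in> sets borel" for s P
  proof -
    have "(\<lambda>x. x s) \<in> N \<rightarrow>\<^sub>M borel" unfolding N_def using that(1) by (rule measurable_component_singleton)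
    from measurable_sets[OF this that(2)] show ?thesis by (simp add: vimage_def Int_def conj_commute)
  qed
  have ab: "a s = 1/2 \<and> b s = 0" if s: "s \<in> K" for s
  proof -
    have key: "min y 0 = 2 * min (a s * y + b s) 0" for y
    proof -
      let ?S = "{x\<in>space N. x s \<le> y}"
      have S: "?S \<in> sets N" using compN[OF s, of "\<lambda>v. v \<le> y"] by simp
      have "X -` ?S \<inter> space M = {\<omega>\<in>space M. eta \<omega> s \<le> y}"
        using measurable_space[OF Xm] s by (auto simp: X_def)
      moreover have "Y -` ?S \<inter> space Pi2 = PiE {..<2} (\<lambda>_. {\<omega>\<in>space M. eta \<omega> s \<le> a s * y + b s})"
      proof -
        have "Max ((\<lambda>i. (eta (\<omega> i) s - b s) / a s) ` {..<2::nat}) \<le> y \<longleftrightarrow>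
              (\<forall>i<2. eta (\<omega> i) s \<le> a s * y + b s)" for \<omega>
          using apos s by (subst Max_le_iff) (auto simp: divide_le_eq algebra_simps lessThan_empty_iff)
        then show ?thesis using measurable_space[OF Ym] s unfolding spPi2
          by (auto simp: Y_def)
      qed
      ultimately have "exp (min y 0) = exp (min (a s * y + b s) 0) ^ 2"
        using lawS[OF S] F[OF s] L1[OF assms(1), of "{\<omega>\<in>space M. eta \<omega> s \<le> a s * y + b s}"]
          measurable_sets[OF etam[OF s], of "{..a s * y + b s}"] unfolding Pi2_def
        by (auto simp: vimage_def Int_def conj_commute)
      also have "\<dots> = exp (2 * min (a s * y + b s) 0)" by (simp add: exp_of_nat_mult[symmetric] power2_eq_square exp_add[symmetric])
      finally show ?thesis by simp
    qed
    from key[of 0] key[of "-1"] key[of "-2"] show ?thesis by (auto simp: min_def split: if_splits)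
  qed
  have Yval: "Y \<omega> s = max (2 * eta (\<omega> 0) s) (2 * eta (\<omega> 1) s)" if "s \<in> K" for \<omega> s
  proof -
    have h: "a s = 1/2" "b s = 0" using ab[OF that] by auto
    show ?thesis using that by (simp add: Y_def h numeral_2_eq_2 lessThan_Suc max.commute)
  qed
  define evM where "evM D = {\<omega>\<in>space M. EE D (eta \<omega>)}" for D
  define p where "p D = measure M (evM D)" for D
  have compM: "{\<omega>\<in>space M. c < eta \<omega> s} \<in> sets M" if "s \<in> K" for s c
  proof -
    have "{\<omega>\<in>space M. c < eta \<omega> s} = (\<lambda>\<omega>. eta \<omega> s) -` {c<..} \<inter> space M" by auto
    also have "\<dots> \<in> sets M" using etam[OF that] by (rule measurable_sets) simp
    finally show ?thesis .
  qed
  have evM_sets: "evM D \<in> sets M" if "countable D" "D \<subseteq> K" for D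
    unfolding evM_def EE_def
    by (intro sets.sets_Collect_countable_All sets.sets_Collect_countable_Ex' compM) (use that in auto)
  have evN_sets: "{x\<in>space N. EE D x} \<in> sets N" if "countable D" "D \<subseteq> K" for D
    unfolding EE_def
    by (intro sets.sets_Collect_countable_All sets.sets_Collect_countable_Ex' compN) (use that in auto)
  have zo: "p D = 0 \<or> p D = 1" if D: "countable D" "D \<subseteq> K" for D
  proof -
    let ?S = "{x\<in>space N. EE D x}"
    have "X -` ?S \<inter> space M = evM D"
    proof -
      have "EE D (X \<omega>) = EE D (eta \<omega>)" for \<omega> using D(2) by (intro EE_cong) (auto simp: X_def)
      then show ?thesis using measurable_space[OF Xm] by (auto simp: evM_def)
    qed
    moreover have "Y -` ?S \<inter> space Pi2 = space Pi2 - PiE {..<2} (\<lambda>_. space M - evM D)"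
    proof -
      have 1: "EE D (Y \<omega>) \<longleftrightarrow> EE D (eta (\<omega> 0)) \<or> EE D (eta (\<omega> 1))" for \<omega>
      proof -
        have "EE D (Y \<omega>) = EE D (\<lambda>s. max (2 * eta (\<omega> 0) s) (2 * eta (\<omega> 1) s))"
          using D(2) Yval by (intro EE_cong) auto
        then show ?thesis by (simp add: EE_max)
      qed
      have 2: "\<omega> \<in> PiE {..<2} (\<lambda>_. space M - evM D) \<longleftrightarrow> \<not> (EE D (eta (\<omega> 0)) \<or> EE D (eta (\<omega> 1)))"
        if "\<omega> \<in> space Pi2" for \<omega>
        using that unfolding spPi2 by (auto simp: PiE_iff evM_def less_2_cases_iff)
      show ?thesis using measurable_space[OF Ym] 1 2 by auto
    qed
    ultimately have "p D = measure Pi2 (space Pi2 - PiE {..<2} (\<lambda>_. space M - evM D))"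
      using lawS[OF evN_sets[OF D]] by (simp add: p_def)
    also have "\<dots> = 1 - measure Pi2 (PiE {..<2} (\<lambda>_. space M - evM D))"
      using evM_sets[OF D] unfolding Pi2_def
      by (intro Q.prob_compl[unfolded Pi2_def] sets_PiM_I_finite) auto
    also have "measure Pi2 (PiE {..<2} (\<lambda>_. space M - evM D)) = (1 - p D) ^ 2"
      unfolding Pi2_def using evM_sets[OF D]
      by (subst L1[OF assms(1)]) (auto simp: p_def prob_compl)
    finally have "p D = 1 - (1 - p D) ^ 2" .
    then have "p D * (p D - 1) = 0" by (simp add: power2_eq_square algebra_simps)
    then show ?thesis by auto
  qed
  obtain D0 where D0: "countable D0" "D0 \<subseteq> K" "\<forall>t\<in>K. \<forall>\<delta>>0. \<exists>s\<in>D0. dist s t < \<delta>"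
    using dense_countable[OF assms(2)] by blast
  have "{\<omega>\<in>space M. (SUP t\<in>K. eta \<omega> t) < 0} = space M - evM D0"
    using sup_char[OF _ assms(4) _ D0(2) D0(3)] assms(6) by (auto simp: evM_def)
  then have res: "measure M {\<omega>\<in>space M. (SUP t\<in>K. eta \<omega> t) < 0} = 1 - p D0"
    using prob_compl[OF evM_sets[OF D0(1,2)]] by (simp add: p_def)
  have "p D0 = 0"
  proof (rule ccontr)
    assume nz: "p D0 \<noteq> 0"
    then have p1: "p D0 = 1" using zo[OF D0(1,2)] by auto
    have "\<exists>t0\<in>K. \<forall>\<epsilon>>0. p (D0 \<inter> ball t0 \<epsilon>) \<noteq> 0"
    proof (rule ccontr)
      assume "\<not> ?thesis"
      then obtain r where r: "\<And>t. t \<in> K \<Longrightarrow> r t > 0 \<and> p (D0 \<inter> ball t (r t)) = 0" by metis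
      have "K \<subseteq> (\<Union>t\<in>K. ball t (r t))" using r by force
      then obtain T where T: "T \<subseteq> K" "finite T" "K \<subseteq> (\<Union>t\<in>T. ball t (r t))"
        using compactE_image[OF assms(2), of K "\<lambda>t. ball t (r t)"] by auto
      have sub: "evM D0 \<subseteq> (\<Union>t\<in>T. evM (D0 \<inter> ball t (r t)))"
        using EE_cover[OF T(2), of D0 r] D0(2) T(3) unfolding evM_def by blast
      have cs: "countable (D0 \<inter> ball t (r t))" "D0 \<inter> ball t (r t) \<subseteq> K" for t
        using D0 by auto
      have "p D0 \<le> measure M (\<Union>t\<in>T. evM (D0 \<inter> ball t (r t)))"
        unfolding p_def using sub evM_sets[OF cs] T(2) by (intro finite_measure_mono) auto
      also have "\<dots> \<le> (\<Sum>t\<in>T. p (D0 \<inter> ball t (r t)))"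
        unfolding p_def using evM_sets[OF cs] T(2) by (intro measure_UNION_le) auto
      also have "\<dots> = 0" using r T(1) by (intro sum.neutral) auto
      finally show False using p1 by simp
    qed
    then obtain t0 where t0: "t0 \<in> K" "\<And>\<epsilon>. \<epsilon> > 0 \<Longrightarrow> p (D0 \<inter> ball t0 \<epsilon>) \<noteq> 0" by blast
    have cs: "countable (D0 \<inter> ball t0 e)" "D0 \<inter> ball t0 e \<subseteq> K" for e
      using D0 by auto
    have "p (D0 \<inter> ball t0 (1 / real (Suc m))) = 1" for m
      using zo[OF cs] t0(2)[of "1 / real (Suc m)"] by auto
    then have "AE \<omega> in M. \<omega> \<in> evM (D0 \<inter> ball t0 (1 / real (Suc m)))" for m
      unfolding p_def by (intro AE_prob_1)
    then have "AE \<omega> in M. \<forall>m. \<omega> \<in> evM (D0 \<inter> ball t0 (1 / real (Suc m)))"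
      by (simp add: AE_all_countable)
    then have "AE \<omega> in M. \<not> eta \<omega> t0 \<le> -1"
    proof (eventually_elim)
      case (elim \<omega>)
      then have sp: "\<omega> \<in> space M" by (simp add: evM_def)
      have "\<forall>m::nat. \<exists>s\<in>D0 \<inter> ball t0 (1 / real (Suc m)). - 1 / real (Suc m) < eta \<omega> s"
      proof
        fix m
        from elim have "EE (D0 \<inter> ball t0 (1 / real (Suc m))) (eta \<omega>)" by (simp add: evM_def)
        then show "\<exists>s\<in>D0 \<inter> ball t0 (1 / real (Suc m)). - 1 / real (Suc m) < eta \<omega> s"
          unfolding EE_def by blast
      qed
      then have "eta \<omega> t0 \<ge> 0" using cont0[of K "eta \<omega>" t0 D0] assms(6) sp t0(1) D0(2) by blast
      then show ?case by simp
    qed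
    then have "measure M {\<omega>\<in>space M. eta \<omega> t0 \<le> -1} = 0" by (rule prob_eq_0_AE)
    moreover have "measure M {\<omega>\<in>space M. eta \<omega> t0 \<le> -1} = exp (-1)" using assms(7) t0(1) by simp
    ultimately show False by simp
  qed
  then show ?thesis using res by simp
qed

end
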